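(* Let $W_n$ ($n\ge4$) be the wheel graph (a cycle on $n-1$ vertices plus a vertex adjacent to all of them) with any finite initial configuration, and let $u,v$ be adjacent vertices of degree $3$. For every integer $t\geq0$: (a) if $|c_t(u)-c_t(v)|<3$ then $|c_{t+1}(u)-c_{t+1}(v)|\leq 6$; (b) if $|c_t(u)-c_t(v)|\geq 3$ then $|c_{t+1}(u)-c_{t+1}(v)|\leq |c_t(u)-c_t(v)|$.
   Context: Diffusion process: for a configuration $c_t:V(G)\to\mathbb{Z}$, $c_{t+1}(w)=c_t(w)-|\{x\in N(w): c_t(w)>c_t(x)\}|+|\{x\in N(w): c_t(w)<c_t(x)\}|$ for all $w$ simultaneously. *)

theory Defs
  imports Main
begin

text \<open>A (simple, finite) graph is given by a vertex set V and a symmetric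
irreflexive adjacency predicate E. Configurations are maps from vertices to int.\<close>

definition nbrs :: "'a set \<Rightarrow> ('a \<Rightarrow> 'a \<Rightarrow> bool) \<Rightarrow> 'a \<Rightarrow> 'a set" where
  "nbrs V E w = {x \<in> V. E w x}"

definition degree :: "'a set \<Rightarrow> ('a \<Rightarrow> 'a \<Rightarrow> bool) \<Rightarrow> 'a \<Rightarrow> nat" where
  "degree V E w = card (nbrs V E w)"

definition diffusion_step :: "'a set \<Rightarrow> ('a \<Rightarrow> 'a \<Rightarrow> bool) \<Rightarrow> ('a \<Rightarrow> int) \<Rightarrow> ('a \<Rightarrow> int)" where
  "diffusion_step V E c = (\<lambda>w. c w
      - int (card {x \<in> nbrs V E w. c w > c x})
      + int (card {x \<in> nbrs V E w. c w < c x}))"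

definition diffusion :: "'a set \<Rightarrow> ('a \<Rightarrow> 'a \<Rightarrow> bool) \<Rightarrow> ('a \<Rightarrow> int) \<Rightarrow> nat \<Rightarrow> ('a \<Rightarrow> int)" where
  "diffusion V E c0 t = (diffusion_step V E ^^ t) c0"

text \<open>Wheel graph W_n on vertices {0..<n}: vertex 0 is the hub, adjacent to all
  others; vertices 1..n-1 form a cycle (i adjacent to i+1, and n-1 adjacent to 1).\<close>
definition wheel_V :: "nat \<Rightarrow> nat set" where
  "wheel_V n = {0..<n}"

definition wheel_adj :: "nat \<Rightarrow> nat \<Rightarrow> nat \<Rightarrow> bool" where
  "wheel_adj n x y \<longleftrightarrow> x < n \<and> y < n \<and> x \<noteq> y \<and>
     (x = 0 \<or> y = 0 \<or> x mod (n - 1) + 1 = y \<or> y mod (n - 1) + 1 = x)"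

end

theory Submission
  imports Defs
begin

lemma card_filter_sum:
  assumes "finite A"
  shows "int (card {x \<in> A. P x}) = (\<Sum>x\<in>A. of_bool (P x))"
proof -
  have "{x \<in> A. P x} = A \<inter> {x. P x}" by auto
  then show ?thesis using assms by simp
qed

lemma step_eq:
  assumes "finite (nbrs V E w)"
  shows "diffusion_step V E c w = c w + (\<Sum>x\<in>nbrs V E w. sgn (c x - c w))"
proof -
  have "(\<Sum>x\<in>nbrs V E w. sgn (c x - c w)) =
        (\<Sum>x\<in>nbrs V E w. of_bool (c w < c x) - of_bool (c w > c x))"
    by (rule sum.cong) (auto simp: sgn_if)
  also have "\<dots> = int (card {x \<in> nbrs V E w. c w < c x}) - int (card {x \<in> nbrs V E w. c w > c x})"
    using assms by (simp add: sum_subtractf card_filter_sum)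
  finally show ?thesis unfolding diffusion_step_def by simp
qed

lemma three_nbrs:
  assumes "finite N" "card N = 3" "v \<in> N" "w \<in> N" "v \<noteq> w"
  obtains x where "N = {v, w, x}" "x \<noteq> v" "x \<noteq> w"
proof -
  have "card (N - {v, w}) = 1" using assms by (simp add: card_Diff_subset)
  then obtain x where x: "N - {v, w} = {x}" by (auto simp: card_Suc_eq)
  then have "N = {v, w, x}" "x \<noteq> v" "x \<noteq> w" using assms by auto
  then show ?thesis using that by blast
qed

lemma arith_core:
  fixes a b cw cx cy :: int
  shows "let d = a + sgn (b - a) + sgn (cw - a) + sgn (cx - a)
              - (b + sgn (a - b) + sgn (cw - b) + sgn (cy - b)) in
     (\<bar>a - b\<bar> < 3 \<longrightarrow> \<bar>d\<bar> \<le> 6) \<and> (\<bar>a - b\<bar> \<ge> 3 \<longrightarrow> \<bar>d\<bar> \<le> \<bar>a - b\<bar>)"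
proof -
  have p: "sgn (b - a) - sgn (a - b) = (if a > b then -2 else if a < b then 2 else 0)"
    by (simp add: sgn_if)
  have q1: "a > b \<Longrightarrow> sgn (cw - a) - sgn (cw - b) \<le> 0 \<and> sgn (cw - a) - sgn (cw - b) \<ge> -2"
    by (simp add: sgn_if)
  have q2: "a < b \<Longrightarrow> sgn (cw - a) - sgn (cw - b) \<ge> 0 \<and> sgn (cw - a) - sgn (cw - b) \<le> 2"
    by (simp add: sgn_if)
  have q3: "a = b \<Longrightarrow> sgn (cw - a) - sgn (cw - b) = 0" by simp
  have r: "\<bar>sgn (cx - a) - sgn (cy - b)\<bar> \<le> 2"
    by (simp add: sgn_if)
  show ?thesis unfolding Let_def
    using p q1 q2 q3 r
    apply (cases "a > b"; cases "a < b")
    apply (simp_all add: abs_le_iff abs_less_iff)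
    done
qed

lemma wheel_nbrs_finite: "finite (nbrs (wheel_V n) (wheel_adj n) w)"
  unfolding nbrs_def wheel_V_def by auto

lemma hub_nbrs: "nbrs (wheel_V n) (wheel_adj n) 0 = {1..<n}"
  unfolding nbrs_def wheel_V_def wheel_adj_def by auto

theorem lemma8:
  fixes n :: nat and c0 :: "nat \<Rightarrow> int" and u v :: nat and t :: nat
  assumes "n \<ge> 4"
    and "u \<in> wheel_V n" and "v \<in> wheel_V n"
    and "wheel_adj n u v"
    and "degree (wheel_V n) (wheel_adj n) u = 3"
    and "degree (wheel_V n) (wheel_adj n) v = 3"
  defines "c \<equiv> diffusion (wheel_V n) (wheel_adj n) c0"
  shows "(\<bar>c t u - c t v\<bar> < 3 \<longrightarrow> \<bar>c (Suc t) u - c (Suc t) v\<bar> \<le> 6) \<and>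
         (\<bar>c t u - c t v\<bar> \<ge> 3 \<longrightarrow> \<bar>c (Suc t) u - c (Suc t) v\<bar> \<le> \<bar>c t u - c t v\<bar>)"
proof -
  let ?V = "wheel_V n" and ?E = "wheel_adj n"
  let ?N = "nbrs ?V ?E"
  have sym: "\<And>x y. ?E x y = ?E y x" unfolding wheel_adj_def by auto
  have mem: "\<And>x y. x \<in> ?N y \<longleftrightarrow> ?E y x" unfolding nbrs_def wheel_adj_def wheel_V_def by auto
  have uv: "u \<noteq> v" using assms(4) unfolding wheel_adj_def by auto
  have obtw: "\<exists>w. w \<in> ?N u \<and> w \<in> ?N v"
  proof (cases "u = 0 \<or> v = 0")
    case False
    then have "0 \<in> ?N u \<and> 0 \<in> ?N v" using assms(2,3) unfolding nbrs_def wheel_adj_def wheel_V_def by auto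
    then show ?thesis by blast
  next
    case True
    have "card (?N 0) = n - 1" by (simp add: hub_nbrs)
    then have n4: "n = 4" using True assms(1,5,6) unfolding degree_def by auto
    show ?thesis
    proof (cases "u = 0")
      case True
      then have "v \<in> {1,2,3}" using assms(3) uv n4 unfolding wheel_V_def by auto
      then show ?thesis using True n4
        by (intro exI[of _ "if v = 1 then 2 else 1"]) (auto simp: nbrs_def wheel_V_def wheel_adj_def)
    next
      case False
      then have "v = 0" using True by simp
      moreover have "u \<in> {1,2,3}" using assms(2) uv n4 False unfolding wheel_V_def by auto
      ultimately show ?thesis using n4
        by (intro exI[of _ "if u = 1 then 2 else 1"]) (auto simp: nbrs_def wheel_V_def wheel_adj_def)
    qed
  qed
  then obtain w where w: "w \<in> ?N u" "w \<in> ?N v" by blast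
  have vw: "v \<noteq> w" "u \<noteq> w" using w unfolding mem wheel_adj_def by auto
  have vNu: "v \<in> ?N u" and uNv: "u \<in> ?N v" using assms(4) sym mem by auto
  obtain x where x: "?N u = {v, w, x}" "x \<noteq> v" "x \<noteq> w"
    using three_nbrs[OF wheel_nbrs_finite assms(5)[unfolded degree_def] vNu w(1) vw(1)] by blast
  obtain y where y: "?N v = {u, w, y}" "y \<noteq> u" "y \<noteq> w"
    using three_nbrs[OF wheel_nbrs_finite assms(6)[unfolded degree_def] uNv w(2) vw(2)] by blast
  have cS: "c (Suc t) = diffusion_step ?V ?E (c t)"
    unfolding c_def diffusion_def by simp
  have su: "c (Suc t) u = c t u + sgn (c t v - c t u) + sgn (c t w - c t u) + sgn (c t x - c t u)"
    unfolding cS step_eq[OF wheel_nbrs_finite] x(1) using x(2,3) vw by simp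
  have sv: "c (Suc t) v = c t v + sgn (c t u - c t v) + sgn (c t w - c t v) + sgn (c t y - c t v)"
    unfolding cS step_eq[OF wheel_nbrs_finite] y(1) using y(2,3) vw by simp
  show ?thesis
    using arith_core[of "c t u" "c t v" "c t w" "c t x" "c t y"] unfolding su sv Let_def
    by (simp add: algebra_simps)
qed

end
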